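(* Let $C$ be a nonempty subset of a Hilbert space $H$ and let $\mathcal{S}=\{T_s:s\in S\}$ be a representation of a semigroup $S$ on $C$ by nonexpansive self-mappings. Suppose that $\{T_sc:s\in S\}$ is bounded for some $c\in C$. Let $X$ be a closed subspace of $\ell^\infty(S)$ containing the constant functions and invariant under left translations. If $X$ has a left invariant mean $\mu$ and if $y_c\in X$ for each $y\in H$, where $y_c(s)=\langle T_sc\,|\,y\rangle$ ($s\in S$), then $T_\mu c\in A_C(\mathcal{S})$; in particular $A_C(\mathcal{S})\neq\emptyset$.
   Context: A representation is a family $T_s:C\to C$ with $T_{st}=T_s\circ T_t$; nonexpansive means $\|T_sx-T_sy\|\le\|x-y\|$. $\ell^\infty(S)$ is the space of bounded complex functions on $S$ with sup norm; the left translate of $f$ by $s$ is $(\ell_sf)(t)=f(st)$. A mean on $X$ is $m\in X^*$ with $\|m\|=m(1)=1$; it is left invariant if $m(\ell_sf)=m(f)$ for all $s\in S$, $f\in X$. $T_\mu c$ denotes the unique element $a\in H$ with $\langle a\,|\,y\rangle=\mu(y_c)$ for all $y\in H$. $A_C(\mathcal{S})$ is the set of $a\in H$ with $\|a-T_sx\|\le\|a-x\|$ for all $x\in C$, $s\in S$. *)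

theory Defs
  imports "HOL-Analysis.Analysis"
begin

text \<open>The HOL library only has real inner product spaces.  A complex inner product
space is a real inner product space carrying a complex scalar multiplication and a
complex inner product, conjugate-linear in the first and linear in the second
argument, whose real part is the real inner product (so the norm is the one
induced by the complex inner product).\<close>

class complex_inner = real_inner +
  fixes scaleC :: "complex \<Rightarrow> 'a \<Rightarrow> 'a"
    and cinner :: "'a \<Rightarrow> 'a \<Rightarrow> complex"
  assumes scaleC_add_right: "scaleC a (x + y) = scaleC a x + scaleC a y"
    and scaleC_add_left: "scaleC (a + b) x = scaleC a x + scaleC b x"
    and scaleC_scaleC: "scaleC a (scaleC b x) = scaleC (a * b) x"
    and scaleC_of_real: "scaleC (complex_of_real r) x = scaleR r x"
    and cinner_add_right: "cinner x (y + z) = cinner x y + cinner x z"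
    and cinner_scaleC_right: "cinner x (scaleC a y) = a * cinner x y"
    and cinner_commute: "cinner y x = cnj (cinner x y)"
    and Re_cinner: "Re (cinner x y) = inner x y"

class complex_hilbert = complex_inner + complete_space

instantiation complex :: complex_hilbert
begin
definition scaleC_complex :: "complex \<Rightarrow> complex \<Rightarrow> complex" where
  "scaleC_complex a x = a * x"
definition cinner_complex :: "complex \<Rightarrow> complex \<Rightarrow> complex" where
  "cinner_complex x y = cnj x * y"
instance
  by standard (auto simp: scaleC_complex_def cinner_complex_def algebra_simps
      inner_complex_def scaleR_conv_of_real)
end

definition supnorm :: "('s \<Rightarrow> complex) \<Rightarrow> real" where
  "supnorm f = (SUP s. cmod (f s))"

definition linfty :: "('s \<Rightarrow> complex) set" where
  "linfty = {f. bounded (range f)}"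

definition ltrans :: "'s::semigroup_mult \<Rightarrow> ('s \<Rightarrow> complex) \<Rightarrow> ('s \<Rightarrow> complex)" where
  "ltrans s f = (\<lambda>t. f (s * t))"

definition closed_linfty_subspace :: "('s \<Rightarrow> complex) set \<Rightarrow> bool" where
  "closed_linfty_subspace X \<longleftrightarrow>
     X \<subseteq> linfty \<and> (\<lambda>_. 0) \<in> X \<and>
     (\<forall>f\<in>X. \<forall>g\<in>X. (\<lambda>s. f s + g s) \<in> X) \<and>
     (\<forall>a. \<forall>f\<in>X. (\<lambda>s. a * f s) \<in> X) \<and>
     (\<forall>F g. (\<forall>n. F n \<in> X) \<and> g \<in> linfty \<and>
        (\<lambda>n. supnorm (\<lambda>s. F n s - g s)) \<longlonglongrightarrow> 0 \<longrightarrow> g \<in> X)"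

definition contains_constants :: "('s \<Rightarrow> complex) set \<Rightarrow> bool" where
  "contains_constants X \<longleftrightarrow> (\<forall>a. (\<lambda>_. a) \<in> X)"

definition left_translation_invariant :: "('s::semigroup_mult \<Rightarrow> complex) set \<Rightarrow> bool" where
  "left_translation_invariant X \<longleftrightarrow> (\<forall>s. \<forall>f\<in>X. ltrans s f \<in> X)"

definition in_dual :: "('s \<Rightarrow> complex) set \<Rightarrow> (('s \<Rightarrow> complex) \<Rightarrow> complex) \<Rightarrow> bool" where
  "in_dual X m \<longleftrightarrow>
     (\<forall>f\<in>X. \<forall>g\<in>X. m (\<lambda>s. f s + g s) = m f + m g) \<and>
     (\<forall>a. \<forall>f\<in>X. m (\<lambda>s. a * f s) = a * m f) \<and>
     (\<exists>K. \<forall>f\<in>X. cmod (m f) \<le> K * supnorm f)"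

definition dual_norm :: "('s \<Rightarrow> complex) set \<Rightarrow> (('s \<Rightarrow> complex) \<Rightarrow> complex) \<Rightarrow> real" where
  "dual_norm X m = Sup {cmod (m f) | f. f \<in> X \<and> supnorm f \<le> 1}"

definition is_mean :: "('s \<Rightarrow> complex) set \<Rightarrow> (('s \<Rightarrow> complex) \<Rightarrow> complex) \<Rightarrow> bool" where
  "is_mean X m \<longleftrightarrow> in_dual X m \<and> dual_norm X m = 1 \<and> m (\<lambda>_. 1) = 1"

definition left_invariant_mean ::
    "('s::semigroup_mult \<Rightarrow> complex) set \<Rightarrow> (('s \<Rightarrow> complex) \<Rightarrow> complex) \<Rightarrow> bool" where
  "left_invariant_mean X m \<longleftrightarrow> is_mean X m \<and> (\<forall>s. \<forall>f\<in>X. m (ltrans s f) = m f)"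

definition nonexpansive_representation ::
    "'h::complex_hilbert set \<Rightarrow> ('s::semigroup_mult \<Rightarrow> 'h \<Rightarrow> 'h) \<Rightarrow> bool" where
  "nonexpansive_representation C T \<longleftrightarrow>
     (\<forall>s. T s ` C \<subseteq> C) \<and>
     (\<forall>s t. \<forall>x\<in>C. T (s * t) x = T s (T t x)) \<and>
     (\<forall>s. \<forall>x\<in>C. \<forall>y\<in>C. norm (T s x - T s y) \<le> norm (x - y))"

definition orbit_fun :: "('s \<Rightarrow> 'h::complex_hilbert \<Rightarrow> 'h) \<Rightarrow> 'h \<Rightarrow> 'h \<Rightarrow> ('s \<Rightarrow> complex)" where
  "orbit_fun T c y = (\<lambda>s. cinner (T s c) y)"

definition T_mu :: "(('s \<Rightarrow> complex) \<Rightarrow> complex) \<Rightarrow> ('s \<Rightarrow> 'h::complex_hilbert \<Rightarrow> 'h) \<Rightarrow> 'h \<Rightarrow> 'h" where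
  "T_mu \<mu> T c = (THE a. \<forall>y. cinner a y = \<mu> (orbit_fun T c y))"

definition A_C :: "'h::complex_hilbert set \<Rightarrow> ('s \<Rightarrow> 'h \<Rightarrow> 'h) \<Rightarrow> 'h set" where
  "A_C C T = {a. \<forall>x\<in>C. \<forall>s. norm (a - T s x) \<le> norm (a - x)}"

end

theory Submission
  imports Defs
begin

lemma cinner_add_left: "cinner (x + y) z = cinner x z + cinner y (z::'a::complex_inner)"
  by (metis cinner_commute cinner_add_right complex_cnj_add)

lemma cinner_self_real: "cinner x x = complex_of_real ((norm (x::'a::complex_inner))^2)"
proof -
  have "Im (cinner x x) = 0" using cinner_commute[of x x]
    by (metis complex_cnj_cancel_iff complex_cnj_zero_iff Im_complex_of_real Reals_cnj_iff Reals_def rangeE)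
  moreover have "Re (cinner x x) = (norm x)^2" by (simp add: Re_cinner power2_norm_eq_inner)
  ultimately show ?thesis by (simp add: complex_eq_iff)
qed

lemma norm_scaleC_sq: "(norm (scaleC u (y::'a::complex_inner)))^2 = (cmod u)^2 * (norm y)^2"
proof -
  have "(norm (scaleC u y))^2 = Re (cinner (scaleC u y) (scaleC u y))"
    by (simp add: Re_cinner power2_norm_eq_inner)
  also have "cinner (scaleC u y) (scaleC u y) = u * cnj u * cinner y y"
    by (metis cinner_scaleC_right cinner_commute complex_cnj_mult complex_cnj_cnj mult.assoc)
  also have "u * cnj u = complex_of_real ((cmod u)^2)" by (metis complex_norm_square of_real_power)
  finally show ?thesis by (simp add: cinner_self_real)
qed

lemma cinner_bound: "cmod (cinner x y) \<le> norm x * norm (y::'a::complex_inner)"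
proof (cases "cinner x y = 0")
  case True then show ?thesis by simp
next
  case False
  define z where "z = cinner x y"
  define u where "u = cnj z / complex_of_real (cmod z)"
  have cu: "cmod u = 1" using False unfolding u_def z_def by (simp add: norm_divide)
  have "cinner x (scaleC u y) = u * z" by (simp add: cinner_scaleC_right z_def)
  also have "u * z = complex_of_real (cmod z)"
  proof -
    have zz: "z * cnj z = complex_of_real (cmod z) * complex_of_real (cmod z)"
      by (metis complex_norm_square of_real_power power2_eq_square)
    have "z \<noteq> 0" using False z_def by simp
    then show ?thesis unfolding u_def using zz by (simp add: field_simps)
  qed
  finally have "cmod z = inner x (scaleC u y)" by (metis Re_cinner Re_complex_of_real)
  also have "\<dots> \<le> norm x * norm (scaleC u y)" by (rule norm_cauchy_schwarz)
  also have "norm (scaleC u y) = norm y"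
  proof -
    have "(norm (scaleC u y))^2 = (norm y)^2" using norm_scaleC_sq[of u y] cu by simp
    then show ?thesis by (simp add: power2_eq_iff_nonneg)
  qed
  finally show ?thesis unfolding z_def .
qed

lemma riesz_real:
  fixes \<psi> :: "'a::{real_inner,complete_space} \<Rightarrow> real"
  assumes add: "\<And>x y. \<psi> (x + y) = \<psi> x + \<psi> y"
    and scal: "\<And>r x. \<psi> (r *\<^sub>R x) = r * \<psi> x"
    and bnd: "\<And>x. \<bar>\<psi> x\<bar> \<le> K * norm x"
  shows "\<exists>a. \<forall>y. inner a y = \<psi> y"
proof -
  define E where "E x = (norm x)^2 - 2 * \<psi> x" for x
  have Elow: "E x \<ge> -(K^2)" for x
  proof -
    have "\<psi> x \<le> K * norm x" using bnd[of x] by linarith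
    moreover have "(norm x - K)^2 \<ge> 0" by simp
    ultimately show ?thesis unfolding E_def by (simp add: power2_diff algebra_simps)
  qed
  define d where "d = Inf (range E)"
  have bdd: "bdd_below (range E)" using Elow by (auto intro!: bdd_belowI)
  have d_le: "d \<le> E z" for z unfolding d_def using bdd by (simp add: cInf_lower)
  have "\<exists>x. E x < d + 1 / real (Suc n)" for n
  proof -
    have "Inf (range E) < d + 1 / real (Suc n)" unfolding d_def by simp
    then show ?thesis using cInf_less_iff[of "range E"] bdd by auto
  qed
  then obtain xs where xs: "\<And>n. E (xs n) < d + 1 / real (Suc n)" by metis
  have half: "\<psi> ((1/2) *\<^sub>R (x + y)) = (\<psi> x + \<psi> y) / 2" for x y
    using scal add by simp
  have par: "(norm (x + y))^2 + (norm (x - y))^2 = 2 * (norm x)^2 + 2 * (norm y)^2" for x y :: 'a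
    by (simp add: power2_norm_eq_inner inner_add_left inner_add_right inner_diff_left inner_diff_right inner_commute)
  have Eid: "E x + E y = 2 * E ((1/2) *\<^sub>R (x + y)) + (norm (x - y))^2 / 2" for x y
  proof -
    have "(norm ((1/2) *\<^sub>R (x + y)))^2 = (norm (x + y))^2 / 4"
      by (simp add: power2_eq_square)
    then show ?thesis unfolding E_def using half[of x y] par[of x y] by (simp add: algebra_simps)
  qed
  have dxs: "(norm (xs m - xs n))^2 / 2 < 1 / real (Suc m) + 1 / real (Suc n)" for m n
  proof -
    have aux: "A + B = 2*M + q/2 \<Longrightarrow> A < d + u \<Longrightarrow> B < d + v \<Longrightarrow> d \<le> M \<Longrightarrow> q/2 < u+v"
      for A B M q u v :: real by linarith
    show ?thesis
      by (rule aux[OF Eid[of "xs m" "xs n"] xs[of m] xs[of n] d_le[of "(1/2) *\<^sub>R (xs m + xs n)"]])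
  qed
  have "Cauchy xs"
  proof (rule metric_CauchyI)
    fix e :: real assume e: "e > 0"
    obtain N :: nat where N: "4 / e^2 < real N" using reals_Archimedean2 by blast
    have "0 < 4 / e^2" using e by simp
    then have "N > 0" using N by (metis of_nat_0 of_nat_0_less_iff less_trans)
    show "\<exists>M. \<forall>m\<ge>M. \<forall>n\<ge>M. dist (xs m) (xs n) < e"
    proof (intro exI allI impI)
      fix m n assume mn: "N \<le> m" "N \<le> n"
      have "1 / real (Suc m) \<le> 1 / real N" using mn \<open>N > 0\<close> by (simp add: frac_le)
      moreover have "1 / real (Suc n) \<le> 1 / real N" using mn \<open>N > 0\<close> by (simp add: frac_le)
      moreover have "4 / real N < e^2" using N e \<open>N > 0\<close> by (simp add: field_simps)
      ultimately have "(norm (xs m - xs n))^2 < e^2" using dxs[of m n] by linarith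
      then have "norm (xs m - xs n) < e" using e by (simp add: power_less_imp_less_base)
      then show "dist (xs m) (xs n) < e" by (simp add: dist_norm)
    qed
  qed
  then obtain a where a: "xs \<longlonglongrightarrow> a" using Cauchy_convergent convergent_def by blast
  have bl: "bounded_linear \<psi>"
    by (rule bounded_linear_intro[where K=K]) (use add scal bnd in \<open>auto simp: mult.commute\<close>)
  have "(\<lambda>n. E (xs n)) \<longlonglongrightarrow> E a"
    unfolding E_def by (intro tendsto_intros bounded_linear.tendsto[OF bl] a)
  have Emin: "E a \<le> E z" for z
  proof (rule LIMSEQ_le[OF \<open>(\<lambda>n. E (xs n)) \<longlonglongrightarrow> E a\<close>])
    have "(\<lambda>n. 1 / real (Suc n)) \<longlonglongrightarrow> 0"
      using LIMSEQ_Suc[OF lim_1_over_n] by simp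
    then show "(\<lambda>n. E z + 1 / real (Suc n)) \<longlonglongrightarrow> E z"
      using tendsto_add[OF tendsto_const[of "E z"]] by fastforce
    show "\<exists>N. \<forall>n\<ge>N. E (xs n) \<le> E z + 1 / real (Suc n)"
    proof (intro exI allI impI)
      fix n show "E (xs n) \<le> E z + 1 / real (Suc n)" using xs[of n] d_le[of z] by linarith
    qed
  qed
  show ?thesis
  proof (intro exI allI)
    fix y
    define c where "c = inner a y - \<psi> y"
    define N where "N = (norm y)^2"
    have N0: "N \<ge> 0" unfolding N_def by simp
    have exp: "E (a + t *\<^sub>R y) = E a + 2 * t * c + t^2 * N" for t
    proof -
      have "(norm (a + t *\<^sub>R y))^2 = (norm a)^2 + 2*t*inner a y + t^2 * (norm y)^2"
        unfolding power2_norm_eq_inner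
        by (simp add: inner_add_left inner_add_right inner_commute power2_eq_square algebra_simps)
      moreover have "\<psi> (a + t *\<^sub>R y) = \<psi> a + t * \<psi> y" using add scal by simp
      ultimately show ?thesis unfolding E_def c_def N_def by (simp add: algebra_simps)
    qed
    define t where "t = - c / (N + 1)"
    have "0 \<le> 2 * t * c + t^2 * N" using Emin[of "a + t *\<^sub>R y"] exp[of t] by simp
    then have "0 \<le> (2 * t * c + t^2 * N) * (N + 1)^2" using N0 by simp
    also have "\<dots> = 2*c*(t*(N+1))*(N+1) + N*(t*(N+1))^2"
      by (simp add: power2_eq_square algebra_simps)
    also have "t*(N+1) = -c" using N0 unfolding t_def by simp
    also have "2*c*(-c)*(N+1) + N*(-c)^2 = -(c^2 * (N + 2))"
      by (simp add: power2_eq_square algebra_simps)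
    finally have "c^2 \<le> 0" using N0 by (simp add: mult_le_0_iff)
    then have "c = 0" by simp
    then show "inner a y = \<psi> y" unfolding c_def by simp
  qed
qed


lemma riesz_complex:
  fixes \<phi> :: "'a::complex_hilbert \<Rightarrow> complex"
  assumes add: "\<And>x y. \<phi> (x + y) = \<phi> x + \<phi> y"
    and scal: "\<And>u x. \<phi> (scaleC u x) = u * \<phi> x"
    and bnd: "\<And>x. cmod (\<phi> x) \<le> K * norm x"
  shows "\<exists>!a. \<forall>y. cinner a y = \<phi> y"
proof -
  have "\<exists>a. \<forall>y. inner a y = Re (\<phi> y)"
  proof (rule riesz_real[where K=K])
    show "Re (\<phi> (x + y)) = Re (\<phi> x) + Re (\<phi> y)" for x y using add by simp
    show "Re (\<phi> (r *\<^sub>R x)) = r * Re (\<phi> x)" for r x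
      using scal[of "complex_of_real r" x] by (simp add: scaleC_of_real)
    show "\<bar>Re (\<phi> x)\<bar> \<le> K * norm x" for x using bnd[of x] abs_Re_le_cmod[of "\<phi> x"] by linarith
  qed
  then obtain a where a: "\<And>y. inner a y = Re (\<phi> y)" by blast
  have ex: "\<forall>y. cinner a y = \<phi> y"
  proof
    fix y
    have "Im (cinner a y) = Re (cinner a (scaleC (- \<i>) y))"
      by (simp add: cinner_scaleC_right)
    also have "\<dots> = Re (\<phi> (scaleC (- \<i>) y))" by (simp add: Re_cinner a)
    also have "\<dots> = Im (\<phi> y)" by (simp add: scal)
    finally show "cinner a y = \<phi> y" using a[of y] by (simp add: complex_eq_iff Re_cinner)
  qed
  show ?thesis
  proof (rule ex1I[of _ a])
    show "\<forall>y. cinner a y = \<phi> y" by (rule ex)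
    fix b assume b: "\<forall>y. cinner b y = \<phi> y"
    have "inner b y = inner a y" for y using b ex by (metis Re_cinner)
    then have "inner (b - a) (b - a) = 0" by (simp add: inner_diff_left)
    then show "b = a" by simp
  qed
qed

lemma X_bounded:
  assumes "closed_linfty_subspace X" "f \<in> X"
  shows "\<exists>B. \<forall>t. cmod (f t) \<le> B"
proof -
  have "bounded (range f)" using assms unfolding closed_linfty_subspace_def linfty_def by auto
  then show ?thesis unfolding bounded_iff by auto
qed

lemma supnorm_upper:
  assumes "closed_linfty_subspace X" "f \<in> X"
  shows "cmod (f t) \<le> supnorm f"
proof -
  obtain B where "\<forall>t. cmod (f t) \<le> B" using X_bounded[OF assms] by blast
  then have "bdd_above (range (\<lambda>s. cmod (f s)))" by (auto intro: bdd_aboveI)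
  then show ?thesis unfolding supnorm_def using cSUP_upper[of t UNIV "\<lambda>s. cmod (f s)"] by simp
qed

lemma supnorm_least:
  assumes "\<And>t. cmod (f t) \<le> r"
  shows "supnorm f \<le> r"
  unfolding supnorm_def by (rule cSUP_least) (use assms in auto)

lemma mean_const:
  assumes "is_mean X \<mu>" "contains_constants X"
  shows "\<mu> (\<lambda>_. a) = a"
proof -
  have "(\<lambda>_. 1) \<in> X" using assms(2) unfolding contains_constants_def by blast
  moreover have "\<forall>a. \<forall>f\<in>X. \<mu> (\<lambda>s. a * f s) = a * \<mu> f" using assms(1) unfolding is_mean_def in_dual_def by blast
  ultimately have "\<mu> (\<lambda>s. a * 1) = a * \<mu> (\<lambda>_. 1)" by fastforce
  then show ?thesis using assms(1) unfolding is_mean_def by simp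
qed

lemma mean_bound:
  assumes X: "closed_linfty_subspace X" and m: "is_mean X \<mu>" and g: "g \<in> X"
  shows "cmod (\<mu> g) \<le> supnorm g"
proof -
  obtain K where K: "\<And>f. f \<in> X \<Longrightarrow> cmod (\<mu> f) \<le> K * supnorm f"
    using m unfolding is_mean_def in_dual_def by blast
  have smul: "\<And>a f. f \<in> X \<Longrightarrow> \<mu> (\<lambda>s. a * f s) = a * \<mu> f"
    using m unfolding is_mean_def in_dual_def by blast
  have sn0: "f \<in> X \<Longrightarrow> 0 \<le> supnorm f" for f
    using supnorm_upper[OF X, of f undefined] norm_ge_zero[of "f undefined"] by linarith
  define r where "r = supnorm g"
  show ?thesis
  proof (cases "r = 0")
    case True then show ?thesis using K[OF g] unfolding r_def by simp
  next
    case False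
    then have r0: "r > 0" using sn0[OF g] unfolding r_def by simp
    define h where "h = (\<lambda>s. complex_of_real (1/r) * g s)"
    have hX: "h \<in> X" using X g unfolding h_def closed_linfty_subspace_def by blast
    have "supnorm h \<le> 1"
    proof (rule supnorm_least)
      fix t
      have "cmod (g t) \<le> r" using supnorm_upper[OF X g] unfolding r_def .
      moreover have "cmod (h t) = cmod (g t) / r" unfolding h_def using r0 by (simp add: norm_divide)
      ultimately show "cmod (h t) \<le> 1" using r0 by simp
    qed
    then have mem: "cmod (\<mu> h) \<in> {cmod (\<mu> f) | f. f \<in> X \<and> supnorm f \<le> 1}" using hX by blast
    have bdd: "bdd_above {cmod (\<mu> f) | f. f \<in> X \<and> supnorm f \<le> 1}"
    proof (rule bdd_aboveI)
      fix z assume "z \<in> {cmod (\<mu> f) | f. f \<in> X \<and> supnorm f \<le> 1}"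
      then obtain f where f: "z = cmod (\<mu> f)" "f \<in> X" "supnorm f \<le> 1" by blast
      have "K * supnorm f \<le> max K 0"
        using f(3) sn0[OF f(2)] by (cases "K \<ge> 0") (auto intro: mult_left_le mult_nonpos_nonneg order.trans)
      then show "z \<le> max K 0" using K[OF f(2)] f(1) by linarith
    qed
    have "cmod (\<mu> h) \<le> dual_norm X \<mu>" unfolding dual_norm_def by (rule cSup_upper[OF mem bdd])
    then have "cmod (\<mu> h) \<le> 1" using m unfolding is_mean_def by simp
    moreover have "\<mu> h = complex_of_real (1/r) * \<mu> g" unfolding h_def using smul[OF g] .
    ultimately have "cmod (\<mu> g) / r \<le> 1" using r0 by (simp add: norm_divide)
    then show ?thesis using r0 unfolding r_def by (simp add: field_simps)
  qed
qed



lemma X_add: "closed_linfty_subspace X \<Longrightarrow> f \<in> X \<Longrightarrow> g \<in> X \<Longrightarrow> (\<lambda>s. f s + g s) \<in> X"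
  unfolding closed_linfty_subspace_def by simp
lemma X_smul: "closed_linfty_subspace X \<Longrightarrow> f \<in> X \<Longrightarrow> (\<lambda>s. a * f s) \<in> X"
  unfolding closed_linfty_subspace_def by simp
lemma mean_add: "is_mean X \<mu> \<Longrightarrow> f \<in> X \<Longrightarrow> g \<in> X \<Longrightarrow> \<mu> (\<lambda>s. f s + g s) = \<mu> f + \<mu> g"
  unfolding is_mean_def in_dual_def by simp
lemma mean_smul: "is_mean X \<mu> \<Longrightarrow> f \<in> X \<Longrightarrow> \<mu> (\<lambda>s. a * f s) = a * \<mu> f"
  unfolding is_mean_def in_dual_def by simp

lemma mean_re_le:
  assumes X: "closed_linfty_subspace X" and cc: "contains_constants X"
    and m: "is_mean X \<mu>" and f: "f \<in> X" and M: "\<And>t. Re (f t) \<le> M"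
  shows "Re (\<mu> f) \<le> M"
proof (rule ccontr)
  assume "\<not> Re (\<mu> f) \<le> M"
  then have e: "Re (\<mu> f) - M > 0" by simp
  define e where "e = Re (\<mu> f) - M"
  obtain B where B: "\<And>t. cmod (f t) \<le> B" using X_bounded[OF X f] by blast
  have B0: "B \<ge> 0" using B[of undefined] norm_ge_zero[of "f undefined"] by linarith
  define L where "L = B + \<bar>M\<bar> + B^2 / e + 1"
  have e0: "e > 0" using e e_def by simp
  have Be: "B^2 / e \<ge> 0" using e0 by simp
  have LB: "L \<ge> B" unfolding L_def using Be by linarith
  have hML: "M + L > B^2 / e" unfolding L_def using Be B0 by linarith
  have hML0: "M + L > 0" using hML Be by linarith
  define g where "g = (\<lambda>t. f t + complex_of_real L)"
  have cX: "(\<lambda>_. complex_of_real L) \<in> X" using cc unfolding contains_constants_def by blast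
  have gX: "g \<in> X" unfolding g_def by (rule X_add[OF X f cX])
  have mg: "\<mu> g = \<mu> f + complex_of_real L"
  proof -
    have "\<mu> g = \<mu> f + \<mu> (\<lambda>_. complex_of_real L)"
      unfolding g_def by (rule mean_add[OF m f cX])
    then show ?thesis using mean_const[OF m cc] by simp
  qed
  have "supnorm g \<le> sqrt ((M + L)^2 + B^2)"
  proof (rule supnorm_least)
    fix t
    have r1: "0 \<le> Re (f t) + L" using abs_Re_le_cmod[of "f t"] B[of t] LB by linarith
    have r2: "Re (f t) + L \<le> M + L" using M[of t] by simp
    have "(Re (f t) + L)^2 \<le> (M + L)^2" by (rule power_mono[OF r2 r1])
    moreover have "(Im (f t))^2 \<le> B^2"
    proof -
      have "\<bar>Im (f t)\<bar> \<le> B" using abs_Im_le_cmod[of "f t"] B[of t] by linarith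
      then have "\<bar>Im (f t)\<bar>^2 \<le> B^2" by (rule power_mono[OF _ abs_ge_zero])
      then show ?thesis by simp
    qed
    ultimately have "(Re (f t) + L)^2 + (Im (f t))^2 \<le> (M + L)^2 + B^2" by linarith
    then have "sqrt ((Re (f t) + L)^2 + (Im (f t))^2) \<le> sqrt ((M + L)^2 + B^2)"
      by (rule real_sqrt_le_mono)
    moreover have "cmod (g t) = sqrt ((Re (f t) + L)^2 + (Im (f t))^2)"
      unfolding g_def cmod_def by simp
    ultimately show "cmod (g t) \<le> sqrt ((M + L)^2 + B^2)" by simp
  qed
  moreover have "cmod (\<mu> g) \<le> supnorm g" by (rule mean_bound[OF X m gX])
  moreover have "Re (\<mu> g) \<le> cmod (\<mu> g)" by (rule complex_Re_le_cmod)
  moreover have "sqrt ((M + L)^2 + B^2) \<le> (M + L) + B^2 / (M + L)"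
  proof -
    define q where "q = B^2 / (M + L)"
    have q1: "(M + L) * q = B^2" unfolding q_def using hML0 by simp
    have q2: "((M + L) + q)^2 = (M + L)^2 + 2 * ((M + L) * q) + q^2"
      by (simp add: power2_eq_square algebra_simps)
    have "(M + L)^2 + B^2 \<le> ((M + L) + B^2 / (M + L))^2"
      using q1 q2 zero_le_power2[of q] zero_le_power2[of B] unfolding q_def[symmetric] by linarith
    then have "sqrt ((M + L)^2 + B^2) \<le> sqrt (((M + L) + B^2 / (M + L))^2)"
      by (rule real_sqrt_le_mono)
    also have "\<dots> = (M + L) + B^2 / (M + L)" using hML0 by simp
    finally show ?thesis .
  qed
  moreover have "Re (\<mu> g) = Re (\<mu> f) + L" using mg by simp
  ultimately have "Re (\<mu> f) + L \<le> (M + L) + B^2 / (M + L)" by linarith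
  then have "e \<le> B^2 / (M + L)" unfolding e_def by simp
  moreover have "B^2 / (M + L) < e"
  proof -
    have "e * (B^2 / e) < e * (M + L)" using mult_strict_left_mono[OF hML e0] .
    then have "B^2 < e * (M + L)" using e0 by simp
    then show ?thesis using hML0 by (simp add: pos_divide_less_eq mult.commute)
  qed
  ultimately show False by simp
qed

theorem lemma4p1:
  fixes C :: "'h::complex_hilbert set"
    and T :: "'s::semigroup_mult \<Rightarrow> 'h \<Rightarrow> 'h"
    and c :: 'h
    and X :: "('s \<Rightarrow> complex) set"
    and \<mu> :: "('s \<Rightarrow> complex) \<Rightarrow> complex"
  assumes "C \<noteq> {}"
    and "nonexpansive_representation C T"
    and "c \<in> C"
    and "bounded (range (\<lambda>s. T s c))"
    and "closed_linfty_subspace X"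
    and "contains_constants X"
    and "left_translation_invariant X"
    and "left_invariant_mean X \<mu>"
    and "\<forall>y. orbit_fun T c y \<in> X"
  shows "T_mu \<mu> T c \<in> A_C C T \<and> A_C C T \<noteq> {}"
proof -
  have X: "closed_linfty_subspace X" and cc: "contains_constants X" using assms by auto
  have m: "is_mean X \<mu>" using assms(8) unfolding left_invariant_mean_def by blast
  have inv: "\<And>s f. f \<in> X \<Longrightarrow> \<mu> (ltrans s f) = \<mu> f"
    using assms(8) unfolding left_invariant_mean_def by blast
  have ltX: "\<And>s f. f \<in> X \<Longrightarrow> ltrans s f \<in> X"
    using assms(7) unfolding left_translation_invariant_def by blast
  have TC: "\<And>s x. x \<in> C \<Longrightarrow> T s x \<in> C"
    using assms(2) unfolding nonexpansive_representation_def by blast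
  have Tmul: "\<And>s t x. x \<in> C \<Longrightarrow> T (s * t) x = T s (T t x)"
    using assms(2) unfolding nonexpansive_representation_def by blast
  have Tne: "\<And>s x y. x \<in> C \<Longrightarrow> y \<in> C \<Longrightarrow> norm (T s x - T s y) \<le> norm (x - y)"
    using assms(2) unfolding nonexpansive_representation_def by blast
  have yX: "\<And>y. orbit_fun T c y \<in> X" using assms(9) by blast
  obtain R where R: "\<And>s. norm (T s c) \<le> R" using assms(4) unfolding bounded_iff by auto
  define \<phi> where "\<phi> y = \<mu> (orbit_fun T c y)" for y
  have ex1: "\<exists>!a. \<forall>y. cinner a y = \<phi> y"
  proof (rule riesz_complex[where K=R])
    show "\<phi> (x + y) = \<phi> x + \<phi> y" for x y
    proof -
      have "orbit_fun T c (x + y) = (\<lambda>s. orbit_fun T c x s + orbit_fun T c y s)"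
        unfolding orbit_fun_def by (simp add: cinner_add_right)
      then show ?thesis unfolding \<phi>_def using mean_add[OF m yX yX] by simp
    qed
    show "\<phi> (scaleC u x) = u * \<phi> x" for u x
    proof -
      have "orbit_fun T c (scaleC u x) = (\<lambda>s. u * orbit_fun T c x s)"
        unfolding orbit_fun_def by (simp add: cinner_scaleC_right)
      then show ?thesis unfolding \<phi>_def using mean_smul[OF m yX] by simp
    qed
    show "cmod (\<phi> x) \<le> R * norm x" for x
    proof -
      have "supnorm (orbit_fun T c x) \<le> R * norm x"
      proof (rule supnorm_least)
        fix t
        have "cmod (orbit_fun T c x t) \<le> norm (T t c) * norm x"
          unfolding orbit_fun_def by (rule cinner_bound)
        also have "\<dots> \<le> R * norm x" using R[of t] by (simp add: mult_right_mono)
        finally show "cmod (orbit_fun T c x t) \<le> R * norm x" .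
      qed
      then show ?thesis unfolding \<phi>_def using mean_bound[OF X m yX[of x]] by linarith
    qed
  qed
  define a where "a = T_mu \<mu> T c"
  have "T_mu \<mu> T c = (THE a. \<forall>y. cinner a y = \<phi> y)" unfolding T_mu_def \<phi>_def by simp
  then have "\<forall>y. cinner a y = \<phi> y" unfolding a_def using theI'[OF ex1] by simp
  then have ainner: "\<And>y. inner a y = Re (\<mu> (orbit_fun T c y))" unfolding \<phi>_def by (metis Re_cinner)
  have main: "norm (a - T s x) \<le> norm (a - x)" if x: "x \<in> C" for x s
  proof -
    define w where "w = T s x - x"
    define f where "f = orbit_fun T c w"
    have fX: "f \<in> X" unfolding f_def by (rule yX)
    define D where "D = (norm (T s x))^2 - (norm x)^2"
    have key: "D - 2 * Re (\<mu> f) \<le> 0"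
    proof -
      define \<sigma> where "\<sigma> = (\<lambda>t::'s. s * t)"
      define G where "G k = (\<lambda>t. f ((\<sigma> ^^ k) t))" for k
      have G: "G k \<in> X \<and> \<mu> (G k) = \<mu> f" for k
      proof (induction k)
        case 0 then show ?case using fX unfolding G_def by simp
      next
        case (Suc k)
        have "G (Suc k) = ltrans s (G k)"
          unfolding G_def ltrans_def
          by (rule ext) (simp only: funpow_Suc_right comp_apply \<sigma>_def)
        then show ?case using Suc ltX inv by simp
      qed
      define H where "H k = (\<lambda>t. complex_of_real D + (-2) * G (Suc k) t)" for k
      have H: "H k \<in> X \<and> \<mu> (H k) = complex_of_real D - 2 * \<mu> f" for k
      proof -
        have c1: "(\<lambda>_. complex_of_real D) \<in> X" using cc unfolding contains_constants_def by blast
        have c2: "(\<lambda>t. (-2) * G (Suc k) t) \<in> X" using X_smul[OF X] G by blast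
        have "H k \<in> X" unfolding H_def by (rule X_add[OF X c1 c2])
        moreover have "\<mu> (H k) = \<mu> (\<lambda>_. complex_of_real D) + \<mu> (\<lambda>t. (-2) * G (Suc k) t)"
          unfolding H_def by (rule mean_add[OF m c1 c2])
        moreover have "\<mu> (\<lambda>t. (-2) * G (Suc k) t) = (-2) * \<mu> f"
          using mean_smul[OF m, of "G (Suc k)" "-2"] G[of "Suc k"] by simp
        ultimately show ?thesis using mean_const[OF m cc] by simp
      qed
      define F where "F n = (\<lambda>t. \<Sum>k<n. H k t)" for n
      have F: "F n \<in> X \<and> \<mu> (F n) = of_nat n * (complex_of_real D - 2 * \<mu> f)" for n
      proof (induction n)
        case 0
        have z: "(\<lambda>_. (0::complex)) \<in> X" using cc unfolding contains_constants_def by blast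
        have "\<mu> (\<lambda>_. 0) = 0" using mean_const[OF m cc, of 0] .
        then show ?case unfolding F_def using z by simp
      next
        case (Suc n)
        have "F (Suc n) = (\<lambda>t. F n t + H n t)" unfolding F_def by simp
        moreover have "F n \<in> X" "\<mu> (F n) = of_nat n * (complex_of_real D - 2 * \<mu> f)" using Suc by auto
        moreover have "H n \<in> X" "\<mu> (H n) = complex_of_real D - 2 * \<mu> f" using H[of n] by auto
        ultimately have "F (Suc n) \<in> X" "\<mu> (F (Suc n)) = of_nat n * (complex_of_real D - 2 * \<mu> f) + (complex_of_real D - 2 * \<mu> f)"
          using X_add[OF X, of "F n" "H n"] mean_add[OF m, of "F n" "H n"] by auto
        then show ?case by (simp add: algebra_simps)
      qed
      define g where "g q = (norm (q - x))^2" for q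
      define Gb where "Gb = (R + norm x)^2"
      have step: "D - 2 * inner (T s p) w \<le> g p - g (T s p)" if p: "p \<in> C" for p
      proof -
        have "norm (T s p - T s x) \<le> norm (p - x)" using Tne p x by blast
        then have "(norm (T s p - T s x))^2 \<le> (norm (p - x))^2" by (simp add: power_mono)
        moreover have "(norm (T s p - T s x))^2 - (norm (T s p - x))^2 = D - 2 * inner (T s p) w"
          unfolding D_def w_def power2_norm_eq_inner
          by (simp add: inner_diff_left inner_diff_right inner_commute algebra_simps)
        ultimately show ?thesis unfolding g_def by linarith
      qed
      have P: "(\<sigma> ^^ Suc k) t = s * (\<sigma> ^^ k) t" for k t unfolding \<sigma>_def by simp
      have orbC: "T u c \<in> C" for u using TC assms(3) by blast
      have ReH: "Re (H k t) \<le> g (T ((\<sigma>^^k) t) c) - g (T ((\<sigma>^^Suc k) t) c)" for k t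
      proof -
        have TP: "T ((\<sigma>^^Suc k) t) c = T s (T ((\<sigma>^^k) t) c)" unfolding P by (rule Tmul[OF assms(3)])
        have "Re (H k t) = D - 2 * Re (f ((\<sigma>^^Suc k) t))" unfolding H_def G_def by simp
        also have "Re (f ((\<sigma>^^Suc k) t)) = inner (T s (T ((\<sigma>^^k) t) c)) w"
          unfolding f_def orbit_fun_def TP by (simp add: Re_cinner)
        finally show ?thesis unfolding TP using step[OF orbC] by simp
      qed
      have ReF: "Re (F n t) \<le> Gb" for n t
      proof -
        have "Re (F n t) = (\<Sum>k<n. Re (H k t))" unfolding F_def by (simp add: Re_sum)
        also have "\<dots> \<le> (\<Sum>k<n. g (T ((\<sigma>^^k) t) c) - g (T ((\<sigma>^^Suc k) t) c))"
          by (rule sum_mono) (rule ReH)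
        also have "\<dots> = g (T ((\<sigma>^^0) t) c) - g (T ((\<sigma>^^n) t) c)"
          by (rule sum_lessThan_telescope')
        also have "\<dots> \<le> g (T t c)" unfolding g_def by simp
        also have "\<dots> \<le> Gb"
        proof -
          have "norm (T t c - x) \<le> norm (T t c) + norm x" by (rule norm_triangle_ineq4)
          also have "\<dots> \<le> R + norm x" using R[of t] by simp
          finally show ?thesis unfolding g_def Gb_def by (simp add: power_mono)
        qed
        finally show ?thesis .
      qed
      have nb: "real n * (D - 2 * Re (\<mu> f)) \<le> Gb" for n
      proof -
        have Fb: "\<And>t. Re (F n t) \<le> Gb" by (rule ReF)
        have "Re (\<mu> (F n)) \<le> Gb" by (rule mean_re_le[OF X cc m conjunct1[OF F[of n]] Fb])
        then show ?thesis using F[of n] by simp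
      qed
      show ?thesis
      proof (rule ccontr)
        assume "\<not> D - 2 * Re (\<mu> f) \<le> 0"
        then have q: "D - 2 * Re (\<mu> f) > 0" by simp
        obtain n :: nat where n: "Gb / (D - 2 * Re (\<mu> f)) < real n" using reals_Archimedean2 by blast
        then have "Gb < real n * (D - 2 * Re (\<mu> f))" using q by (simp add: pos_divide_less_eq)
        then show False using nb[of n] by simp
      qed
    qed
    have "(norm (a - T s x))^2 - (norm (a - x))^2 = D - 2 * inner a w"
      unfolding D_def w_def power2_norm_eq_inner
      by (simp add: inner_diff_left inner_diff_right inner_commute algebra_simps)
    moreover have "inner a w = Re (\<mu> f)" unfolding f_def by (rule ainner)
    ultimately have "(norm (a - T s x))^2 \<le> (norm (a - x))^2" using key by linarith
    then show ?thesis by (rule power2_le_imp_le) simp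
  qed
  have "a \<in> A_C C T" unfolding A_C_def using main by blast
  then show ?thesis unfolding a_def by blast
qed

end
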